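(* Let $a>0$, $b>0$, and let $\bar{\mathcal W}^{a,b}(t)=(M_1(G_{a,b}(t)),\dots,M_q(G_{a,b}(t)))$. Its Lévy measure $\Pi^{\bar{\mathcal W}}$ is given, for $A_1,\dots,A_q\subseteq\mathbb{N}_0$, by $$\Pi^{\bar{\mathcal W}}(A_1\times\cdots\times A_q)=b\sum_{\bar n\succ\bar0}\ \sum_{\substack{\Omega(k_i,n_i)\\ i=1,\dots,q}}\Gamma\Big(\sum_{i=1}^q\sum_{j=1}^{k_i}n_{ij}\Big)\prod_{i=1}^q\prod_{j=1}^{k_i}\frac{(\lambda_{ij}/(\lambda+a))^{n_{ij}}}{n_{ij}!}\,\mathbb{I}_{\{n_i\in A_i\}}.$$
   Context: Fix $q\ge1$, integers $k_1,\dots,k_q\ge1$, $\lambda_{ij}>0$ ($1\le i\le q$, $1\le j\le k_i$), $\lambda=\sum_{i,j}\lambda_{ij}$. The MGCP $\bar M(t)=(M_1(t),\dots,M_q(t))$ is the $\mathbb{N}_0^q$-valued Lévy process with $\bar M(0)=\bar0$, independent components and $\Pr\{\bar M(t)=\bar n\}=\prod_{i=1}^q\sum_{\Omega(k_i,n_i)}\prod_{j=1}^{k_i}\frac{(\lambda_{ij}t)^{n_{ij}}}{n_{ij}!}e^{-\lambda_{ij}t}$. $\{G_{a,b}(t)\}$ is a gamma subordinator independent of $\bar M$, with $\mathbb{E}e^{-sG_{a,b}(t)}=(1+s/a)^{-bt}$ and Lévy measure $bs^{-1}e^{-as}\,\mathrm{d}s$. $\Omega(k_i,n_i)=\{(n_{i1},\dots,n_{ik_i})\in\mathbb{N}_0^{k_i}:\sum_jjn_{ij}=n_i\}$;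 the inner sum runs over families $(n_{ij})$ with $(n_{i1},\dots,n_{ik_i})\in\Omega(k_i,n_i)$ for each $i$. $\bar n\succ\bar0$ means $\bar n\in\mathbb{N}_0^q\setminus\{\bar0\}$. *)

theory Defs
  imports "HOL-Analysis.Analysis"
begin

text \<open>Points of N_0^q: functions nat => nat supported on {1..q}.\<close>
definition NQ :: "nat \<Rightarrow> (nat \<Rightarrow> nat) set" where
  "NQ q = {n. \<forall>i. i \<notin> {1..q} \<longrightarrow> n i = 0}"

definition Omega :: "nat \<Rightarrow> nat \<Rightarrow> (nat \<Rightarrow> nat) set" where
  "Omega k n = {v. (\<forall>j. j \<notin> {1..k} \<longrightarrow> v j = 0) \<and> (\<Sum>j\<in>{1..k}. j * v j) = n}"

definition Fam :: "nat \<Rightarrow> (nat \<Rightarrow> nat) \<Rightarrow> (nat \<Rightarrow> nat) \<Rightarrow> (nat \<Rightarrow> nat \<Rightarrow> nat) set" where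
  "Fam q k nn = {m. (\<forall>i\<in>{1..q}. m i \<in> Omega (k i) (nn i)) \<and> (\<forall>i. i \<notin> {1..q} \<longrightarrow> m i = (\<lambda>_. 0))}"

definition mgcp_pmf :: "nat \<Rightarrow> (nat \<Rightarrow> nat) \<Rightarrow> (nat \<Rightarrow> nat \<Rightarrow> real) \<Rightarrow> real \<Rightarrow> (nat \<Rightarrow> nat) \<Rightarrow> real" where
  "mgcp_pmf q k lam s nn =
     (\<Prod>i\<in>{1..q}. \<Sum>v\<in>Omega (k i) (nn i).
        \<Prod>j\<in>{1..k i}. (lam i j * s) ^ (v j) / fact (v j) * exp (- lam i j * s))"

text \<open>Density of G_{a,b}(t) (Gamma law with shape b t and rate a, t > 0),
  determined by E exp(-s G(t)) = (1 + s/a)^(-b t).\<close>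
definition gamma_sub_density :: "real \<Rightarrow> real \<Rightarrow> real \<Rightarrow> real \<Rightarrow> real" where
  "gamma_sub_density a b t s =
     a powr (b * t) * s powr (b * t - 1) * exp (- a * s) / Gamma (b * t)"

text \<open>Pr{W(t) = n} = Pr{M(G(t)) = n}, for t > 0 (M and G independent).\<close>
definition W_pmf :: "nat \<Rightarrow> (nat \<Rightarrow> nat) \<Rightarrow> (nat \<Rightarrow> nat \<Rightarrow> real) \<Rightarrow> real \<Rightarrow> real \<Rightarrow> real
    \<Rightarrow> (nat \<Rightarrow> nat) \<Rightarrow> real" where
  "W_pmf q k lam a b t nn =
     (LINT s:{0<..}|lborel. mgcp_pmf q k lam s nn * gamma_sub_density a b t s)"

definition W_charfun :: "nat \<Rightarrow> (nat \<Rightarrow> nat) \<Rightarrow> (nat \<Rightarrow> nat \<Rightarrow> real) \<Rightarrow> real \<Rightarrow> real \<Rightarrow> real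
    \<Rightarrow> (nat \<Rightarrow> real) \<Rightarrow> complex" where
  "W_charfun q k lam a b t \<theta> =
     infsum (\<lambda>nn. complex_of_real (W_pmf q k lam a b t nn) * cis (\<Sum>i\<in>{1..q}. \<theta> i * real (nn i))) (NQ q)"

definition lam_total :: "nat \<Rightarrow> (nat \<Rightarrow> nat) \<Rightarrow> (nat \<Rightarrow> nat \<Rightarrow> real) \<Rightarrow> real" where
  "lam_total q k lam = (\<Sum>i\<in>{1..q}. \<Sum>j\<in>{1..k i}. lam i j)"

definition zeroQ :: "nat \<Rightarrow> nat" where "zeroQ = (\<lambda>_. 0)"

definition levy_formula :: "nat \<Rightarrow> (nat \<Rightarrow> nat) \<Rightarrow> (nat \<Rightarrow> nat \<Rightarrow> real) \<Rightarrow> real \<Rightarrow> real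
    \<Rightarrow> (nat \<Rightarrow> nat set) \<Rightarrow> real" where
  "levy_formula q k lam a b A =
     b * infsum (\<lambda>nn. \<Sum>m\<in>Fam q k nn.
            Gamma (real (\<Sum>i\<in>{1..q}. \<Sum>j\<in>{1..k i}. m i j)) *
            (\<Prod>i\<in>{1..q}. \<Prod>j\<in>{1..k i}.
                (lam i j / (lam_total q k lam + a)) ^ (m i j) / fact (m i j)) *
            (if \<forall>i\<in>{1..q}. nn i \<in> A i then 1 else 0))
       (NQ q - {zeroQ})"

end

theory Submission
  imports Defs
begin


definition FSr :: "'a set \<Rightarrow> nat \<Rightarrow> ('a \<Rightarrow> nat) set" where
  "FSr P r = {f. (\<forall>p. p \<notin> P \<longrightarrow> f p = 0) \<and> sum f P = r}"

lemma finite_FSr: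
  assumes "finite P" shows "finite (FSr P r)"
proof -
  have "FSr P r \<subseteq> {f. \<forall>x. (x \<in> P \<longrightarrow> f x \<in> {0..r}) \<and> (x \<notin> P \<longrightarrow> f x = 0)}"
    using assms by (auto simp: FSr_def intro: member_le_sum)
  moreover have "finite {f. \<forall>x. (x \<in> P \<longrightarrow> f x \<in> {0..r}) \<and> (x \<notin> P \<longrightarrow> f x = (0::nat))}"
    by (rule finite_set_of_finite_funs) (use assms in auto)
  ultimately show ?thesis by (rule finite_subset)
qed

lemma multinomial:
  fixes x :: "'a \<Rightarrow> 'c :: field_char_0"
  assumes "finite P"
  shows "(\<Sum>f\<in>FSr P r. \<Prod>p\<in>P. x p ^ f p / fact (f p)) = (sum x P) ^ r / fact r"
  using assms
proof (induction P arbitrary: r rule: finite_induct)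
  case empty
  have "FSr ({}::'a set) r = (if r = 0 then {\<lambda>_. 0} else {})"
    by (auto simp: FSr_def)
  then show ?case by (cases r) auto
next
  case (insert i P)
  let ?G = "\<lambda>f. \<Prod>p\<in>insert i P. x p ^ f p / fact (f p)"
  have "(\<Sum>f\<in>FSr (insert i P) r. ?G f) =
        (\<Sum>(a,g)\<in>Sigma {..r} (\<lambda>a. FSr P (r - a)). ?G (g(i:=a)))"
  proof (rule sum.reindex_bij_witness[where i="\<lambda>(a,g). g(i:=a)" and j="\<lambda>f. (f i, f(i:=0))"])
    fix f assume "f \<in> FSr (insert i P) r"
    show "(case (f i, f(i := 0)) of (a, g) \<Rightarrow> g(i := a)) = f" by auto
  next
    fix f assume f: "f \<in> FSr (insert i P) r"
    have s: "sum (f(i:=0)) P = sum f P"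
      by (rule sum.cong) (use insert(2) in auto)
    have "f i + sum f P = r" using f insert by (auto simp: FSr_def)
    then show "(f i, f(i := 0)) \<in> Sigma {..r} (\<lambda>a. FSr P (r - a))"
      using f s by (auto simp: FSr_def)
  next
    fix ag assume "ag \<in> Sigma {..r} (\<lambda>a. FSr P (r - a))"
    then obtain a g where ag: "ag = (a,g)" "a \<le> r" "g \<in> FSr P (r - a)" by auto
    have gi: "g i = 0" using ag insert(2) by (auto simp: FSr_def)
    show "((case ag of (a, g) \<Rightarrow> g(i := a)) i, (case ag of (a, g) \<Rightarrow> g(i := a))(i := 0)) = ag"
      using ag gi by auto
  next
    fix ag assume "ag \<in> Sigma {..r} (\<lambda>a. FSr P (r - a))"
    then obtain a g where ag: "ag = (a,g)" "a \<le> r" "g \<in> FSr P (r - a)" by auto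
    have "sum (g(i:=a)) P = sum g P"
      by (rule sum.cong) (use insert(2) in auto)
    then show "(case ag of (a, g) \<Rightarrow> g(i := a)) \<in> FSr (insert i P) r"
      using ag insert by (auto simp: FSr_def)
  next
    fix f assume "f \<in> FSr (insert i P) r"
    show "(case (f i, f(i := 0)) of (a, g) \<Rightarrow> ?G (g(i := a))) = ?G f"
      by (simp only: prod.case fun_upd_upd fun_upd_triv)
  qed
  also have "\<dots> = (\<Sum>a\<le>r. \<Sum>g\<in>FSr P (r - a). ?G (g(i:=a)))"
    by (rule sum.Sigma[symmetric]) (use finite_FSr insert(1) in auto)
  also have "\<dots> = (\<Sum>a\<le>r. x i ^ a / fact a * (sum x P ^ (r - a) / fact (r - a)))"
  proof (rule sum.cong[OF refl])
    fix a assume "a \<in> {..r}"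
    have "(\<Sum>g\<in>FSr P (r - a). ?G (g(i:=a))) =
          (\<Sum>g\<in>FSr P (r - a). x i ^ a / fact a * (\<Prod>p\<in>P. x p ^ g p / fact (g p)))"
    proof (rule sum.cong[OF refl])
      fix g assume "g \<in> FSr P (r - a)"
      have "(\<Prod>p\<in>P. x p ^ (g(i:=a)) p / fact ((g(i:=a)) p)) = (\<Prod>p\<in>P. x p ^ g p / fact (g p))"
        by (rule prod.cong) (use insert(2) in auto)
      then show "?G (g(i:=a)) = x i ^ a / fact a * (\<Prod>p\<in>P. x p ^ g p / fact (g p))"
        using insert by simp
    qed
    also have "\<dots> = x i ^ a / fact a * (sum x P ^ (r - a) / fact (r - a))"
      by (simp only: sum_distrib_left[symmetric] insert.IH)
    finally show "(\<Sum>g\<in>FSr P (r - a). ?G (g(i:=a))) = x i ^ a / fact a * (sum x P ^ (r - a) / fact (r - a))" .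
  qed
  also have "\<dots> = (\<Sum>a\<le>r. of_nat (r choose a) * x i ^ a * sum x P ^ (r - a)) / fact r"
    by (simp add: sum_divide_distrib binomial_fact field_simps)
  also have "\<dots> = (x i + sum x P) ^ r / fact r"
    by (simp add: binomial_ring)
  finally show ?case using insert by simp
qed

lemma group_FS:
  fixes x :: "'a \<Rightarrow> 'c::{real_normed_field,banach}" and c :: "nat \<Rightarrow> 'c"
  assumes P: "finite P"
    and sm: "summable (\<lambda>r. norm (c r) * (\<Sum>p\<in>P. norm (x p)) ^ r / fact r)"
    and sS: "(\<lambda>r. c r * (sum x P) ^ r / fact r) sums S"
  shows "((\<lambda>f. c (sum f P) * (\<Prod>p\<in>P. x p ^ f p / fact (f p))) has_sum S)
           {f. \<forall>p. p \<notin> P \<longrightarrow> f p = 0}"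
proof -
  define FS where "FS = {f. \<forall>p. p \<notin> P \<longrightarrow> f p = (0::nat)}"
  define h where "h = (\<lambda>f. c (sum f P) * (\<Prod>p\<in>P. x p ^ f p / fact (f p)))"
  define \<rho> where "\<rho> = (\<Sum>p\<in>P. norm (x p))"
  define X where "X = sum x P"
  have U: "FS = (\<Union>r\<in>UNIV. FSr P r)" by (auto simp: FS_def FSr_def)
  have disj: "disjoint_family_on (FSr P) UNIV"
    by (auto simp: disjoint_family_on_def FSr_def)
  have fib: "(h has_sum (c r * X ^ r / fact r)) (FSr P r)" for r
  proof (rule has_sum_finiteI[OF finite_FSr[OF P]])
    have "sum h (FSr P r) = (\<Sum>f\<in>FSr P r. c r * (\<Prod>p\<in>P. x p ^ f p / fact (f p)))"
      by (rule sum.cong) (auto simp: h_def FSr_def)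
    also have "\<dots> = c r * (X ^ r / fact r)"
      by (simp only: sum_distrib_left[symmetric] multinomial[OF P] X_def)
    finally show "c r * X ^ r / fact r = sum h (FSr P r)" by simp
  qed
  have nfib: "((\<lambda>f. norm (h f)) has_sum (norm (c r) * \<rho> ^ r / fact r)) (FSr P r)" for r
  proof (rule has_sum_finiteI[OF finite_FSr[OF P]])
    have "(\<Sum>f\<in>FSr P r. norm (h f)) =
          (\<Sum>f\<in>FSr P r. norm (c r) * (\<Prod>p\<in>P. norm (x p) ^ f p / fact (f p)))"
      by (rule sum.cong) (auto simp: h_def FSr_def norm_mult prod_norm[symmetric] norm_divide norm_power)
    also have "\<dots> = norm (c r) * (\<rho> ^ r / fact r)"
      by (simp only: sum_distrib_left[symmetric] multinomial[OF P] \<rho>_def)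
    finally show "norm (c r) * \<rho> ^ r / fact r = (\<Sum>f\<in>FSr P r. norm (h f))" by simp
  qed
  have gs: "(\<lambda>r. norm (c r) * \<rho> ^ r / fact r) summable_on UNIV"
    using sm unfolding \<rho>_def
    by (subst summable_on_UNIV_nonneg_real_iff) (auto simp: \<rho>_def intro!: divide_nonneg_pos mult_nonneg_nonneg sum_nonneg zero_le_power)
  have "(\<lambda>f. norm (h f)) summable_on (\<Union>r\<in>UNIV. FSr P r)"
    by (rule summable_on_UnionI[OF nfib gs _ disj]) auto
  then have hs: "h summable_on FS"
    unfolding U by (rule abs_summable_summable)
  have bij: "bij_betw (\<lambda>f. (sum f P, f)) FS (Sigma UNIV (FSr P))"
    by (rule bij_betwI[where g=snd]) (auto simp: FS_def FSr_def)
  have hs2: "(h \<circ> snd) summable_on Sigma UNIV (FSr P)"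
    using hs summable_on_reindex_bij_betw[OF bij, of "h \<circ> snd"] by simp
  have nX: "norm X \<le> \<rho>" unfolding X_def \<rho>_def by (rule norm_sum)
  have sm2: "summable (\<lambda>r. norm (c r * X ^ r / fact r))"
  proof (rule summable_comparison_test[OF _ sm])
    show "\<exists>N. \<forall>n\<ge>N. norm (norm (c n * X ^ n / fact n)) \<le> norm (c n) * (\<Sum>p\<in>P. norm (x p)) ^ n / fact n"
      using nX unfolding \<rho>_def
      by (auto simp: norm_mult norm_divide norm_power intro!: divide_right_mono mult_left_mono power_mono)
  qed
  have gS: "((\<lambda>r. c r * X ^ r / fact r) has_sum S) UNIV"
    by (rule norm_summable_imp_has_sum[OF sm2]) (use sS in \<open>simp add: X_def\<close>)
  have "((h \<circ> snd) has_sum S) (Sigma UNIV (FSr P))"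
    by (rule has_sum_SigmaI[OF _ gS hs2]) (use fib in simp)
  then have "((\<lambda>f. (h \<circ> snd) (sum f P, f)) has_sum S) FS"
    using has_sum_reindex_bij_betw[OF bij] by blast
  then show ?thesis by (simp add: h_def FS_def)
qed



lemma finite_Omega: "finite (Omega k n)"
proof -
  have "Omega k n \<subseteq> {f. \<forall>x. (x \<in> {1..k} \<longrightarrow> f x \<in> {0..n}) \<and> (x \<notin> {1..k} \<longrightarrow> f x = 0)}"
  proof safe
    fix v x assume v: "v \<in> Omega k n" and x: "x \<in> {1..k}"
    have "v x \<le> x * v x" using x by simp
    also have "\<dots> \<le> (\<Sum>j\<in>{1..k}. j * v j)" by (rule member_le_sum) (use x in auto)
    finally show "v x \<in> {0..n}" using v by (auto simp: Omega_def)
  qed (auto simp: Omega_def)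
  moreover have "finite {f. \<forall>x. (x \<in> {1..k} \<longrightarrow> f x \<in> {0..n}) \<and> (x \<notin> {1..k} \<longrightarrow> f x = (0::nat))}"
    by (rule finite_set_of_finite_funs) auto
  ultimately show ?thesis by (rule finite_subset)
qed

definition ext0 :: "nat \<Rightarrow> (nat \<Rightarrow> nat \<Rightarrow> nat) \<Rightarrow> nat \<Rightarrow> nat \<Rightarrow> nat" where
  "ext0 q g = (\<lambda>i. if i \<in> {1..q} then g i else (\<lambda>_. 0))"

lemma Fam_eq: "Fam q k n = ext0 q ` PiE {1..q} (\<lambda>i. Omega (k i) (n i))"
proof safe
  fix m assume m: "m \<in> Fam q k n"
  have "restrict m {1..q} \<in> PiE {1..q} (\<lambda>i. Omega (k i) (n i))" using m by (auto simp: Fam_def)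
  moreover have "m = ext0 q (restrict m {1..q})" using m by (auto simp: Fam_def ext0_def fun_eq_iff)
  ultimately show "m \<in> ext0 q ` PiE {1..q} (\<lambda>i. Omega (k i) (n i))" by blast
qed (auto simp: Fam_def ext0_def PiE_def)

lemma inj_ext0: "inj_on (ext0 q) (PiE {1..q} B)"
proof (rule inj_onI)
  fix f g assume f: "f \<in> PiE {1..q} B" and g: "g \<in> PiE {1..q} B" and e: "ext0 q f = ext0 q g"
  show "f = g"
  proof (rule PiE_ext[OF f g])
    fix i assume "i \<in> {1..q}" then show "f i = g i" using fun_cong[OF e, of i] by (simp add: ext0_def)
  qed
qed

lemma finite_Fam: "finite (Fam q k n)"
  unfolding Fam_eq by (intro finite_imageI finite_PiE) (auto simp: finite_Omega)

definition FC :: "nat \<Rightarrow> (nat \<Rightarrow> nat) \<Rightarrow> (nat \<Rightarrow> nat \<Rightarrow> nat) set" where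
  "FC q k = {m. \<forall>i j. (i, j) \<notin> Sigma {1..q} (\<lambda>i. {1..k i}) \<longrightarrow> m i j = 0}"

definition NN :: "(nat \<Rightarrow> nat) \<Rightarrow> (nat \<Rightarrow> nat \<Rightarrow> nat) \<Rightarrow> nat \<Rightarrow> nat" where
  "NN k m = (\<lambda>i. \<Sum>j\<in>{1..k i}. j * m i j)"

lemma Fam_iff: "(n \<in> NQ q \<and> m \<in> Fam q k n) \<longleftrightarrow> (m \<in> FC q k \<and> n = NN k m)"
proof
  assume a: "n \<in> NQ q \<and> m \<in> Fam q k n"
  then have m: "m \<in> FC q k" by (auto simp: Fam_def FC_def Omega_def fun_eq_iff)
  moreover have "n = NN k m"
  proof
    fix i show "n i = NN k m i"
    proof (cases "i \<in> {1..q}")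
      case True then show ?thesis using a by (auto simp: Fam_def Omega_def NN_def)
    next
      case False then show ?thesis using a by (auto simp: Fam_def NQ_def NN_def)
    qed
  qed
  ultimately show "m \<in> FC q k \<and> n = NN k m" by blast
next
  assume a: "m \<in> FC q k \<and> n = NN k m"
  then show "n \<in> NQ q \<and> m \<in> Fam q k n"
    by (auto simp: Fam_def NQ_def NN_def FC_def Omega_def fun_eq_iff)
qed

lemma CG:
  fixes x :: "nat \<Rightarrow> nat \<Rightarrow> 'c::{real_normed_field,banach}" and c :: "nat \<Rightarrow> 'c"
  assumes sm: "summable (\<lambda>r. norm (c r) * (\<Sum>i\<in>{1..q}. \<Sum>j\<in>{1..k i}. norm (x i j)) ^ r / fact r)"
    and sS: "(\<lambda>r. c r * (\<Sum>i\<in>{1..q}. \<Sum>j\<in>{1..k i}. x i j) ^ r / fact r) sums S"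
  shows "((\<lambda>n. \<Sum>m\<in>Fam q k n. c (\<Sum>i\<in>{1..q}. \<Sum>j\<in>{1..k i}. m i j) *
            (\<Prod>i\<in>{1..q}. \<Prod>j\<in>{1..k i}. x i j ^ m i j / fact (m i j))) has_sum S) (NQ q)"
proof -
  define P where "P = Sigma {1..q} (\<lambda>i. {1..k i})"
  have P: "finite P" by (simp add: P_def)
  define H where "H = (\<lambda>m. c (\<Sum>i\<in>{1..q}. \<Sum>j\<in>{1..k i}. m i j) *
            (\<Prod>i\<in>{1..q}. \<Prod>j\<in>{1..k i}. x i j ^ m i j / fact (m i j)))"
  have e1: "(\<Sum>i\<in>{1..q}. \<Sum>j\<in>{1..k i}. g i j) = (\<Sum>p\<in>P. case_prod g p)" for g :: "nat \<Rightarrow> nat \<Rightarrow> 'd::comm_monoid_add"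
    unfolding P_def by (rule sum.Sigma) auto
  have e2: "(\<Prod>i\<in>{1..q}. \<Prod>j\<in>{1..k i}. g i j) = (\<Prod>p\<in>P. case_prod g p)" for g :: "nat \<Rightarrow> nat \<Rightarrow> 'd::comm_monoid_mult"
    unfolding P_def by (rule prod.Sigma) auto
  have G: "((\<lambda>f. c (sum f P) * (\<Prod>p\<in>P. case_prod x p ^ f p / fact (f p))) has_sum S)
           {f. \<forall>p. p \<notin> P \<longrightarrow> f p = 0}"
  proof (rule group_FS[OF P])
    have s1: "(\<Sum>i\<in>{1..q}. \<Sum>j\<in>{1..k i}. norm (x i j)) = (\<Sum>p\<in>P. norm (case_prod x p))"
      using e1[of "\<lambda>i j. norm (x i j)"] by (simp add: split_def)
    have s2: "(\<Sum>i\<in>{1..q}. \<Sum>j\<in>{1..k i}. x i j) = (\<Sum>p\<in>P. case_prod x p)"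
      using e1[of "x"] by (simp add: split_def)
    show "summable (\<lambda>r. norm (c r) * (\<Sum>p\<in>P. norm (case_prod x p)) ^ r / fact r)"
      using sm unfolding s1 .
    show "(\<lambda>r. c r * sum (case_prod x) P ^ r / fact r) sums S"
      using sS unfolding s2 .
  qed
  have bij1: "bij_betw (\<lambda>m. case_prod m) (FC q k) {f. \<forall>p. p \<notin> P \<longrightarrow> f p = 0}"
    by (rule bij_betwI[where g=curry]) (auto simp: FC_def P_def)
  have "((\<lambda>m. c (sum (case_prod m) P) * (\<Prod>p\<in>P. case_prod x p ^ case_prod m p / fact (case_prod m p))) has_sum S) (FC q k)"
    using G has_sum_reindex_bij_betw[OF bij1, of "\<lambda>f. c (sum f P) * (\<Prod>p\<in>P. case_prod x p ^ f p / fact (f p))" S]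
    by simp
  moreover have "H = (\<lambda>m. c (sum (case_prod m) P) * (\<Prod>p\<in>P. case_prod x p ^ case_prod m p / fact (case_prod m p)))"
  proof
    fix m show "H m = c (sum (case_prod m) P) * (\<Prod>p\<in>P. case_prod x p ^ case_prod m p / fact (case_prod m p))"
    unfolding H_def using e1[of m] e2[of "\<lambda>i j. x i j ^ m i j / fact (m i j)"] by (simp add: split_def)
  qed
  ultimately have H1: "(H has_sum S) (FC q k)"
    by simp
  have bij2: "bij_betw (\<lambda>m. (NN k m, m)) (FC q k) (Sigma (NQ q) (Fam q k))"
  proof (rule bij_betwI[where g=snd])
    show "(\<lambda>m. (NN k m, m)) \<in> FC q k \<rightarrow> Sigma (NQ q) (Fam q k)"
      using Fam_iff[of _ q _ k] by auto
    show "snd \<in> Sigma (NQ q) (Fam q k) \<rightarrow> FC q k"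
      using Fam_iff[of _ q _ k] by (metis (no_types, lifting) Pi_I SigmaE prod.sel(2))
    show "\<And>y. y \<in> Sigma (NQ q) (Fam q k) \<Longrightarrow> (NN k (snd y), snd y) = y"
      using Fam_iff[of _ q _ k] by (metis SigmaE prod.sel(1,2))
  qed auto
  have "((\<lambda>nm. H (snd nm)) has_sum S) (Sigma (NQ q) (Fam q k))"
    using H1 has_sum_reindex_bij_betw[OF bij2, of "\<lambda>nm. H (snd nm)"] by simp
  then have "((\<lambda>n. sum H (Fam q k n)) has_sum S) (NQ q)"
    by (rule has_sum_SigmaD) (simp add: finite_Fam)
  then show ?thesis by (simp add: H_def)
qed



lemma GI:
  fixes x c :: real
  assumes x: "x > 0" and c: "c > 0"
  shows "has_bochner_integral lborel (\<lambda>s. indicator {0<..} s *\<^sub>R (s powr (x - 1) * exp (- c * s)))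
           (Gamma x / c powr x)"
proof -
  define F where "F = (\<lambda>s::real. indicator {0<..} s *\<^sub>R (s powr (x - 1) * exp (- c * s)))"
  define f where "f = (\<lambda>t::real. ennreal (indicator {0..} t * t powr (x - 1) / exp t))"
  have Fm: "F \<in> borel_measurable borel" unfolding F_def by measurable
  have fm: "f \<in> borel_measurable borel" unfolding f_def by measurable
  have pt: "f (c * s) = ennreal (c powr (x - 1)) * ennreal (F s)" for s
  proof (cases "s > 0")
    case True
    then show ?thesis using c
      by (simp add: f_def F_def powr_mult exp_minus field_simps ennreal_mult[symmetric])
  next
    case False
    then have "\<not> (c * s > 0)" using c by (simp add: zero_less_mult_iff)
    then have "c * s < 0 \<or> c * s = 0" by linarith
    then show ?thesis using False by (auto simp: f_def F_def)
  qed
  have "ennreal (Gamma x) = (\<integral>\<^sup>+t. f t \<partial>lborel)"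
    unfolding f_def by (rule Gamma_conv_nn_integral_real[OF x])
  also have "\<dots> = ennreal \<bar>c\<bar> * (\<integral>\<^sup>+s. f (0 + c * s) \<partial>lborel)"
    by (rule nn_integral_real_affine[OF fm]) (use c in auto)
  also have "\<dots> = ennreal c * (ennreal (c powr (x - 1)) * (\<integral>\<^sup>+s. ennreal (F s) \<partial>lborel))"
    using c Fm by (simp add: pt nn_integral_cmult)
  also have "\<dots> = ennreal (c powr x) * (\<integral>\<^sup>+s. ennreal (F s) \<partial>lborel)"
    using c by (simp add: ennreal_mult[symmetric] mult.assoc[symmetric] powr_mult_base)
  finally have eq: "ennreal (Gamma x) = ennreal (c powr x) * (\<integral>\<^sup>+s. ennreal (F s) \<partial>lborel)" .
  have "(\<integral>\<^sup>+s. ennreal (F s) \<partial>lborel) = (ennreal (1 / c powr x) * ennreal (c powr x)) * (\<integral>\<^sup>+s. ennreal (F s) \<partial>lborel)"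
    using c by (simp add: ennreal_mult[symmetric])
  also have "\<dots> = ennreal (1 / c powr x) * ennreal (Gamma x)"
    by (simp add: eq mult.assoc)
  also have "\<dots> = ennreal (Gamma x / c powr x)"
    using c x by (simp add: ennreal_mult[symmetric])
  finally have nn: "(\<integral>\<^sup>+s. ennreal (F s) \<partial>lborel) = ennreal (Gamma x / c powr x)" .
  show ?thesis
    unfolding F_def[symmetric]
    by (rule has_bochner_integral_nn_integral[OF _ _ _ nn])
       (use Fm x c in \<open>auto simp: F_def indicator_def\<close>)
qed

lemma mgcp_term:
  "(\<Prod>i\<in>{1..q}. \<Prod>j\<in>{1..k i}. (lam i j * s) ^ (m i j) / fact (m i j) * exp (- lam i j * s)) =
   (\<Prod>i\<in>{1..q}. \<Prod>j\<in>{1..k i}. lam i j ^ m i j / fact (m i j)) *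
   s ^ (\<Sum>i\<in>{1..q}. \<Sum>j\<in>{1..k i}. m i j) * exp (- lam_total q k lam * s)"
proof -
  have "(\<Prod>i\<in>{1..q}. \<Prod>j\<in>{1..k i}. (lam i j * s) ^ (m i j) / fact (m i j) * exp (- lam i j * s)) =
   (\<Prod>i\<in>{1..q}. \<Prod>j\<in>{1..k i}. lam i j ^ m i j / fact (m i j)) *
   ((\<Prod>i\<in>{1..q}. \<Prod>j\<in>{1..k i}. s ^ m i j) * (\<Prod>i\<in>{1..q}. \<Prod>j\<in>{1..k i}. exp (- lam i j * s)))"
    by (simp add: prod.distrib[symmetric] power_mult_distrib mult_ac)
  also have "(\<Prod>i\<in>{1..q}. \<Prod>j\<in>{1..k i}. s ^ m i j) = s ^ (\<Sum>i\<in>{1..q}. \<Sum>j\<in>{1..k i}. m i j)"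
    by (simp add: power_sum)
  also have "(\<Prod>i\<in>{1..q}. \<Prod>j\<in>{1..k i}. exp (- lam i j * s)) = exp (- lam_total q k lam * s)"
  proof -
    have "(\<Prod>i\<in>{1..q}. \<Prod>j\<in>{1..k i}. exp (- lam i j * s)) = exp (\<Sum>i\<in>{1..q}. \<Sum>j\<in>{1..k i}. - lam i j * s)"
      by (simp only: exp_sum finite_atLeastAtMost)
    also have "(\<Sum>i\<in>{1..q}. \<Sum>j\<in>{1..k i}. - lam i j * s) = - lam_total q k lam * s"
      by (simp add: lam_total_def sum_distrib_right sum_negf)
    finally show ?thesis .
  qed
  finally show ?thesis by (simp add: mult_ac)
qed

lemma mgcp_expand:
  "mgcp_pmf q k lam s n = (\<Sum>m\<in>Fam q k n.
     (\<Prod>i\<in>{1..q}. \<Prod>j\<in>{1..k i}. lam i j ^ m i j / fact (m i j)) *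
     s ^ (\<Sum>i\<in>{1..q}. \<Sum>j\<in>{1..k i}. m i j) * exp (- lam_total q k lam * s))"
proof -
  define G where "G = (\<lambda>i v. \<Prod>j\<in>{1..k i}. (lam i j * s) ^ (v j) / fact (v j) * exp (- lam i j * s))"
  have "mgcp_pmf q k lam s n = (\<Prod>i\<in>{1..q}. \<Sum>v\<in>Omega (k i) (n i). G i v)"
    by (simp add: mgcp_pmf_def G_def)
  also have "\<dots> = (\<Sum>g\<in>PiE {1..q} (\<lambda>i. Omega (k i) (n i)). \<Prod>i\<in>{1..q}. G i (g i))"
    by (rule prod_sum_PiE) (auto simp: finite_Omega)
  also have "\<dots> = (\<Sum>g\<in>PiE {1..q} (\<lambda>i. Omega (k i) (n i)). \<Prod>i\<in>{1..q}. G i (ext0 q g i))"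
    by (rule sum.cong[OF refl], rule prod.cong[OF refl]) (simp add: ext0_def)
  also have "\<dots> = (\<Sum>m\<in>Fam q k n. \<Prod>i\<in>{1..q}. G i (m i))"
    unfolding Fam_eq by (rule sum.reindex[OF inj_ext0, symmetric, unfolded o_def])
  also have "\<dots> = (\<Sum>m\<in>Fam q k n.
     (\<Prod>i\<in>{1..q}. \<Prod>j\<in>{1..k i}. lam i j ^ m i j / fact (m i j)) *
     s ^ (\<Sum>i\<in>{1..q}. \<Sum>j\<in>{1..k i}. m i j) * exp (- lam_total q k lam * s))"
    by (rule sum.cong[OF refl]) (simp only: G_def mgcp_term)
  finally show ?thesis .
qed

lemma W_pmf_formula:
  assumes t: "t > 0" and a: "a > 0" and b: "b > 0" and L: "lam_total q k lam \<ge> 0"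
  shows "W_pmf q k lam a b t n = (\<Sum>m\<in>Fam q k n.
     (\<Prod>i\<in>{1..q}. \<Prod>j\<in>{1..k i}. lam i j ^ m i j / fact (m i j)) * (a powr (b * t) / Gamma (b * t)) *
     (Gamma (b * t + real (\<Sum>i\<in>{1..q}. \<Sum>j\<in>{1..k i}. m i j)) /
      (lam_total q k lam + a) powr (b * t + real (\<Sum>i\<in>{1..q}. \<Sum>j\<in>{1..k i}. m i j))))"
proof -
  define \<beta> where "\<beta> = b * t"
  define L where "L = lam_total q k lam"
  define c where "c = L + a"
  define A where "A = (\<lambda>m::nat\<Rightarrow>nat\<Rightarrow>nat. \<Prod>i\<in>{1..q}. \<Prod>j\<in>{1..k i}. lam i j ^ m i j / fact (m i j))"
  define tot where "tot = (\<lambda>m::nat\<Rightarrow>nat\<Rightarrow>nat. \<Sum>i\<in>{1..q}. \<Sum>j\<in>{1..k i}. m i j)"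
  define C where "C = a powr \<beta> / Gamma \<beta>"
  have \<beta>: "\<beta> > 0" using b t by (simp add: \<beta>_def)
  have c: "c > 0" using L a by (simp add: c_def L_def)
  have pt: "mgcp_pmf q k lam s n * gamma_sub_density a b t s =
        (\<Sum>m\<in>Fam q k n. A m * C * (s powr (\<beta> + real (tot m) - 1) * exp (- c * s)))" if s: "s > 0" for s
  proof -
    have "mgcp_pmf q k lam s n * gamma_sub_density a b t s =
       (\<Sum>m\<in>Fam q k n. A m * s ^ tot m * exp (- L * s) * (a powr \<beta> * s powr (\<beta> - 1) * exp (- a * s) / Gamma \<beta>))"
      by (simp add: mgcp_expand gamma_sub_density_def sum_distrib_right sum_divide_distrib A_def tot_def L_def \<beta>_def)
    also have "\<dots> = (\<Sum>m\<in>Fam q k n. A m * C * (s powr (\<beta> + real (tot m) - 1) * exp (- c * s)))"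
    proof (rule sum.cong[OF refl])
      fix m
      have "s powr (\<beta> + real (tot m) - 1) = s ^ tot m * s powr (\<beta> - 1)"
        using s by (simp add: powr_add[symmetric] powr_realpow[symmetric] algebra_simps)
      moreover have "exp (- c * s) = exp (- L * s) * exp (- a * s)"
        by (simp add: c_def exp_add[symmetric] algebra_simps)
      ultimately show "A m * s ^ tot m * exp (- L * s) * (a powr \<beta> * s powr (\<beta> - 1) * exp (- a * s) / Gamma \<beta>) =
          A m * C * (s powr (\<beta> + real (tot m) - 1) * exp (- c * s))"
        by (simp add: C_def)
    qed
    finally show ?thesis .
  qed
  have HB: "has_bochner_integral lborel
     (\<lambda>s. \<Sum>m\<in>Fam q k n. A m * C * (indicator {0<..} s *\<^sub>R (s powr (\<beta> + real (tot m) - 1) * exp (- c * s))))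
     (\<Sum>m\<in>Fam q k n. A m * C * (Gamma (\<beta> + real (tot m)) / c powr (\<beta> + real (tot m))))"
  proof (rule has_bochner_integral_sum, rule has_bochner_integral_mult_right)
    fix m show "has_bochner_integral lborel (\<lambda>s. indicator {0<..} s *\<^sub>R (s powr (\<beta> + real (tot m) - 1) * exp (- c * s)))
          (Gamma (\<beta> + real (tot m)) / c powr (\<beta> + real (tot m)))"
      by (rule GI) (use \<beta> c in auto)
  qed
  have "W_pmf q k lam a b t n = (LINT s:{0<..}|lborel. (\<Sum>m\<in>Fam q k n. A m * C * (s powr (\<beta> + real (tot m) - 1) * exp (- c * s))))"
    unfolding W_pmf_def by (rule set_lebesgue_integral_cong) (auto simp: pt)
  also have "\<dots> = integral\<^sup>L lborel
     (\<lambda>s. \<Sum>m\<in>Fam q k n. A m * C * (indicator {0<..} s *\<^sub>R (s powr (\<beta> + real (tot m) - 1) * exp (- c * s))))"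
    unfolding set_lebesgue_integral_def by (simp add: sum_distrib_left mult_ac)
  also have "\<dots> = (\<Sum>m\<in>Fam q k n. A m * C * (Gamma (\<beta> + real (tot m)) / c powr (\<beta> + real (tot m))))"
    by (rule has_bochner_integral_integral_eq[OF HB])
  finally show ?thesis by (simp add: A_def C_def tot_def c_def L_def \<beta>_def)
qed



lemma cis_sum: "finite A \<Longrightarrow> cis (\<Sum>x\<in>A. f x) = (\<Prod>x\<in>A. cis (f x))"
  by (induction A rule: finite_induct) (auto simp: cis_mult[symmetric])

lemma cis_fam:
  assumes "m \<in> Fam q k n"
  shows "cis (\<Sum>i\<in>{1..q}. \<theta> i * real (n i)) = (\<Prod>i\<in>{1..q}. \<Prod>j\<in>{1..k i}. cis (\<theta> i * real j) ^ m i j)"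
proof -
  have "cis (\<Sum>i\<in>{1..q}. \<theta> i * real (n i)) = (\<Prod>i\<in>{1..q}. cis (\<theta> i * real (n i)))"
    by (simp add: cis_sum)
  also have "\<dots> = (\<Prod>i\<in>{1..q}. \<Prod>j\<in>{1..k i}. cis (\<theta> i * real j) ^ m i j)"
  proof (rule prod.cong[OF refl])
    fix i assume i: "i \<in> {1..q}"
    then have ni: "n i = (\<Sum>j\<in>{1..k i}. j * m i j)" using assms by (auto simp: Fam_def Omega_def)
    have "\<theta> i * real (n i) = (\<Sum>j\<in>{1..k i}. real (m i j) * (\<theta> i * real j))"
      by (simp add: ni sum_distrib_left mult_ac)
    then show "cis (\<theta> i * real (n i)) = (\<Prod>j\<in>{1..k i}. cis (\<theta> i * real j) ^ m i j)"
      by (simp add: cis_sum Complex.DeMoivre del: of_nat_sum)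
  qed
  finally show ?thesis .
qed

lemma fam_x:
  "(\<Prod>i\<in>{1..q}. \<Prod>j\<in>{1..k i}. (complex_of_real (p i j) * cis (\<theta> i * real j)) ^ m i j / fact (m i j)) =
   complex_of_real (\<Prod>i\<in>{1..q}. \<Prod>j\<in>{1..k i}. p i j ^ m i j / fact (m i j)) *
   (\<Prod>i\<in>{1..q}. \<Prod>j\<in>{1..k i}. cis (\<theta> i * real j) ^ m i j)"
  by (simp add: power_mult_distrib prod.distrib[symmetric] mult_ac)

lemma charsum_eq:
  "complex_of_real (\<Sum>m\<in>Fam q k n. w (\<Sum>i\<in>{1..q}. \<Sum>j\<in>{1..k i}. m i j) *
        (\<Prod>i\<in>{1..q}. \<Prod>j\<in>{1..k i}. p i j ^ m i j / fact (m i j))) * cis (\<Sum>i\<in>{1..q}. \<theta> i * real (n i)) =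
   (\<Sum>m\<in>Fam q k n. complex_of_real (w (\<Sum>i\<in>{1..q}. \<Sum>j\<in>{1..k i}. m i j)) *
        (\<Prod>i\<in>{1..q}. \<Prod>j\<in>{1..k i}. (complex_of_real (p i j) * cis (\<theta> i * real j)) ^ m i j / fact (m i j)))"
  unfolding of_real_sum sum_distrib_right
proof (rule sum.cong[OF refl])
  fix m assume m: "m \<in> Fam q k n"
  show "complex_of_real (w (\<Sum>i\<in>{1..q}. \<Sum>j\<in>{1..k i}. m i j) *
        (\<Prod>i\<in>{1..q}. \<Prod>j\<in>{1..k i}. p i j ^ m i j / fact (m i j))) * cis (\<Sum>i\<in>{1..q}. \<theta> i * real (n i)) =
    complex_of_real (w (\<Sum>i\<in>{1..q}. \<Sum>j\<in>{1..k i}. m i j)) *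
        (\<Prod>i\<in>{1..q}. \<Prod>j\<in>{1..k i}. (complex_of_real (p i j) * cis (\<theta> i * real j)) ^ m i j / fact (m i j))"
    unfolding fam_x cis_fam[OF m] by (simp add: mult_ac)
qed

lemma Gamma_div_fact: "Gamma (real r) / fact r = 1 / real r"
proof (cases r)
  case (Suc r')
  have "Gamma (real r) = fact r'" using Gamma_fact[of r'] Suc by (simp add: add.commute)
  moreover have "fact r = real (Suc r') * fact r'" using Suc by simp
  ultimately show ?thesis using Suc by (simp del: of_nat_Suc)
qed simp

lemma Gamma_nonneg_nat: "Gamma (real r) \<ge> 0"
proof (cases r)
  case (Suc r')
  have "Gamma (real r) = fact r'" using Gamma_fact[of r'] Suc by (simp add: add.commute)
  then show ?thesis by simp
qed simp

lemma Gamma_poch: "\<beta> > 0 \<Longrightarrow> Gamma (\<beta> + real r) / Gamma \<beta> = pochhammer \<beta> r"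
  by (subst pochhammer_Gamma) auto



context
  fixes q :: nat and k :: "nat \<Rightarrow> nat" and lam :: "nat \<Rightarrow> nat \<Rightarrow> real" and a b :: real
  assumes lampos: "\<forall>i\<in>{1..q}. \<forall>j\<in>{1..k i}. lam i j > 0"
    and apos: "a > 0" and bpos: "b > 0"
begin

abbreviation "LL \<equiv> lam_total q k lam"
abbreviation "pp i j \<equiv> lam i j / (LL + a)"
abbreviation "rho \<equiv> (\<Sum>i\<in>{1..q}. \<Sum>j\<in>{1..k i}. pp i j)"
abbreviation "xx \<theta> i j \<equiv> complex_of_real (pp i j) * cis (\<theta> i * real j)"
abbreviation "XX \<theta> \<equiv> (\<Sum>i\<in>{1..q}. \<Sum>j\<in>{1..k i}. xx \<theta> i j)"

lemma LL_nonneg: "LL \<ge> 0"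
  unfolding lam_total_def using lampos by (intro sum_nonneg) (auto intro: less_imp_le)

lemma c0_pos: "LL + a > 0" using LL_nonneg apos by simp

lemma pp_nonneg: "i \<in> {1..q} \<Longrightarrow> j \<in> {1..k i} \<Longrightarrow> pp i j \<ge> 0"
  using lampos c0_pos by (auto intro!: divide_nonneg_pos less_imp_le)

lemma rho_eq: "rho = LL / (LL + a)"
  by (simp add: lam_total_def sum_divide_distrib)

lemma rho_nonneg: "rho \<ge> 0" using rho_eq LL_nonneg c0_pos by simp

lemma rho_lt1: "rho < 1"
proof -
  have "LL / (LL + a) < 1" using c0_pos apos by (simp add: divide_less_eq)
  then show ?thesis by (simp only: rho_eq)
qed

lemma one_minus_rho: "1 - rho = a / (LL + a)"
  using rho_eq c0_pos by (simp add: field_simps)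

lemma normsum: "(\<Sum>i\<in>{1..q}. \<Sum>j\<in>{1..k i}. norm (xx \<theta> i j)) = rho"
proof (intro sum.cong refl)
  fix i j assume "i \<in> {1..q}" "j \<in> {1..k i}"
  then have "pp i j \<ge> 0" by (rule pp_nonneg)
  then show "norm (xx \<theta> i j) = pp i j"
    by (simp only: norm_mult norm_cis norm_of_real mult_1_right abs_of_nonneg)
qed

lemma normX: "norm (XX \<theta>) \<le> rho"
proof -
  have "norm (XX \<theta>) \<le> (\<Sum>i\<in>{1..q}. norm (\<Sum>j\<in>{1..k i}. xx \<theta> i j))" by (rule norm_sum)
  also have "\<dots> \<le> (\<Sum>i\<in>{1..q}. \<Sum>j\<in>{1..k i}. norm (xx \<theta> i j))"
    by (intro sum_mono norm_sum)
  finally show ?thesis using normsum by simp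
qed

lemma normX1: "norm (XX \<theta>) < 1" using normX rho_lt1 by (rule le_less_trans)

lemma XX0: "XX (\<lambda>_. 0) = complex_of_real rho" by simp

abbreviation "piL n \<equiv> b * (\<Sum>m\<in>Fam q k n. Gamma (real (\<Sum>i\<in>{1..q}. \<Sum>j\<in>{1..k i}. m i j)) *
   (\<Prod>i\<in>{1..q}. \<Prod>j\<in>{1..k i}. (lam i j / (lam_total q k lam + a)) ^ m i j / fact (m i j)))"

lemma pi_has_sum:
  "((\<lambda>n. complex_of_real (piL n) * cis (\<Sum>i\<in>{1..q}. \<theta> i * real (n i)))
     has_sum (- (complex_of_real b * Ln (1 - XX \<theta>)))) (NQ q)"
proof -
  define c where "c = (\<lambda>r::nat. complex_of_real (b * Gamma (real r)))"
  define X where "X = XX \<theta>"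
  have e1: "norm (c r) * rho ^ r / fact r = b * rho ^ r / real r" for r
  proof -
    have "norm (c r) = b * Gamma (real r)" using bpos Gamma_nonneg_nat[of r] by (simp only: c_def norm_of_real) simp
    then have "norm (c r) * rho ^ r / fact r = b * rho ^ r * (Gamma (real r) / fact r)" by simp
    then show ?thesis by (simp add: Gamma_div_fact)
  qed
  have sm: "summable (\<lambda>r. norm (c r) * (\<Sum>i\<in>{1..q}. \<Sum>j\<in>{1..k i}. norm (xx \<theta> i j)) ^ r / fact r)"
    unfolding normsum e1
  proof (rule summable_comparison_test[where g="\<lambda>r. b * rho ^ r"])
    show "summable (\<lambda>r. b * rho ^ r)"
      by (rule summable_mult, rule summable_geometric) (use rho_nonneg rho_lt1 in auto)
    show "\<exists>N. \<forall>n\<ge>N. norm (b * rho ^ n / real n) \<le> b * rho ^ n"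
    proof (intro exI allI impI)
      fix n :: nat assume "n \<ge> 1"
      have h0: "0 \<le> b * rho ^ n" using bpos rho_nonneg by simp
      have h1: "real n \<ge> 1" using \<open>n \<ge> 1\<close> by simp
      have "b * rho ^ n * 1 \<le> b * rho ^ n * real n" by (rule mult_left_mono[OF h1 h0])
      then have "b * rho ^ n / real n \<le> b * rho ^ n" using h1 by (simp add: divide_le_eq)
      then show "norm (b * rho ^ n / real n) \<le> b * rho ^ n"
        using h0 h1 by simp
    qed
  qed
  have e2: "c r * X ^ r / fact r = complex_of_real b * (X ^ r / of_nat r)" for r
  proof -
    have "c r / fact r = complex_of_real (b * (Gamma (real r) / fact r))"
      by (simp add: c_def)
    also have "\<dots> = complex_of_real b / of_nat r" by (simp add: Gamma_div_fact)
    finally show ?thesis by (simp add: field_simps)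
  qed
  have "(\<lambda>n. - ((- (- X)) ^ n) / of_nat n) sums ln (1 + - X)"
    by (rule Ln_series') (use normX1[of \<theta>] in \<open>simp add: X_def\<close>)
  then have "(\<lambda>n. - (X ^ n / of_nat n)) sums Ln (1 - X)" by simp
  then have "(\<lambda>n. X ^ n / of_nat n) sums (- Ln (1 - X))"
    using sums_minus by fastforce
  then have sS: "(\<lambda>r. c r * X ^ r / fact r) sums (- (complex_of_real b * Ln (1 - X)))"
    unfolding e2 using sums_mult[of _ _ "complex_of_real b"] by fastforce
  have "((\<lambda>n. \<Sum>m\<in>Fam q k n. c (\<Sum>i\<in>{1..q}. \<Sum>j\<in>{1..k i}. m i j) *
            (\<Prod>i\<in>{1..q}. \<Prod>j\<in>{1..k i}. xx \<theta> i j ^ m i j / fact (m i j))) has_sum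
        (- (complex_of_real b * Ln (1 - X)))) (NQ q)"
    by (rule CG[OF sm]) (use sS in \<open>simp add: X_def\<close>)
  moreover have "complex_of_real (piL n) * cis (\<Sum>i\<in>{1..q}. \<theta> i * real (n i)) =
     (\<Sum>m\<in>Fam q k n. c (\<Sum>i\<in>{1..q}. \<Sum>j\<in>{1..k i}. m i j) *
            (\<Prod>i\<in>{1..q}. \<Prod>j\<in>{1..k i}. xx \<theta> i j ^ m i j / fact (m i j)))" for n
    unfolding c_def
    using charsum_eq[where w="\<lambda>r. b * Gamma (real r)" and q=q and k=k and p="\<lambda>i j. lam i j / (lam_total q k lam + a)" and n=n and \<theta>=\<theta>]
    by (simp only: sum_distrib_left mult.assoc)
  ultimately show ?thesis by (simp add: X_def)
qed

lemma W_has_sum: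
  assumes t: "t > 0"
  shows "((\<lambda>n. complex_of_real (W_pmf q k lam a b t n) * cis (\<Sum>i\<in>{1..q}. \<theta> i * real (n i)))
     has_sum (complex_of_real (a powr (b * t) / (LL + a) powr (b * t)) *
              (1 + - XX \<theta>) powr (- complex_of_real (b * t)))) (NQ q)"
proof -
  define \<beta> where "\<beta> = b * t"
  define K where "K = a powr \<beta> / (LL + a) powr \<beta>"
  define X where "X = XX \<theta>"
  have \<beta>: "\<beta> > 0" using bpos t by (simp add: \<beta>_def)
  have K: "K > 0" using apos c0_pos by (simp add: K_def)
  define c where "c = (\<lambda>r::nat. complex_of_real (K * pochhammer \<beta> r))"
  have Wn: "W_pmf q k lam a b t n = (\<Sum>m\<in>Fam q k n. (K * pochhammer \<beta> (\<Sum>i\<in>{1..q}. \<Sum>j\<in>{1..k i}. m i j)) *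
        (\<Prod>i\<in>{1..q}. \<Prod>j\<in>{1..k i}. (lam i j / (LL + a)) ^ m i j / fact (m i j)))" for n
    unfolding W_pmf_formula[OF t apos bpos LL_nonneg]
  proof (rule sum.cong[OF refl])
    fix m :: "nat \<Rightarrow> nat \<Rightarrow> nat"
    define r where "r = (\<Sum>i\<in>{1..q}. \<Sum>j\<in>{1..k i}. m i j)"
    define A where "A = (\<Prod>i\<in>{1..q}. \<Prod>j\<in>{1..k i}. lam i j ^ m i j / fact (m i j))"
    have P: "(\<Prod>i\<in>{1..q}. \<Prod>j\<in>{1..k i}. (lam i j / (LL + a)) ^ m i j / fact (m i j)) = A / (LL + a) ^ r"
    proof -
      have "(\<Prod>i\<in>{1..q}. \<Prod>j\<in>{1..k i}. (lam i j / (LL + a)) ^ m i j / fact (m i j)) =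
            (\<Prod>i\<in>{1..q}. \<Prod>j\<in>{1..k i}. (lam i j ^ m i j / fact (m i j)) / (LL + a) ^ m i j)"
        using c0_pos by (intro prod.cong refl) (simp add: power_divide field_simps)
      also have "\<dots> = A / (\<Prod>i\<in>{1..q}. \<Prod>j\<in>{1..k i}. (LL + a) ^ m i j)"
        unfolding A_def by (simp only: prod_dividef)
      also have "(\<Prod>i\<in>{1..q}. \<Prod>j\<in>{1..k i}. (LL + a) ^ m i j) = (LL + a) ^ r"
        unfolding r_def by (simp only: power_sum)
      finally show ?thesis .
    qed
    have pw: "(LL + a) powr (\<beta> + real r) = (LL + a) powr \<beta> * (LL + a) ^ r"
      using c0_pos by (simp add: powr_add powr_realpow)
    have G: "Gamma (\<beta> + real r) = pochhammer \<beta> r * Gamma \<beta>"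
      using Gamma_poch[OF \<beta>, of r] Gamma_real_pos[OF \<beta>] by (simp add: divide_eq_eq mult_ac)
    have main: "A * (a powr (b * t) / Gamma (b * t)) * (Gamma (b * t + real r) / (LL + a) powr (b * t + real r)) =
          K * pochhammer \<beta> r * (A / (LL + a) ^ r)"
    proof -
      have Gn: "Gamma \<beta> \<noteq> 0" using Gamma_real_pos[OF \<beta>] by simp
      have "A * (a powr (b * t) / Gamma (b * t)) * (Gamma (b * t + real r) / (LL + a) powr (b * t + real r)) =
            A * (a powr \<beta> / Gamma \<beta>) * (pochhammer \<beta> r * Gamma \<beta> / ((LL + a) powr \<beta> * (LL + a) ^ r))"
        by (simp only: \<beta>_def[symmetric] pw G)
      also have "\<dots> = K * pochhammer \<beta> r * (A / (LL + a) ^ r)"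
        using Gn c0_pos by (simp add: K_def field_simps)
      finally show ?thesis .
    qed
    show "(\<Prod>i\<in>{1..q}. \<Prod>j\<in>{1..k i}. lam i j ^ m i j / fact (m i j)) * (a powr (b * t) / Gamma (b * t)) *
       (Gamma (b * t + real (\<Sum>i\<in>{1..q}. \<Sum>j\<in>{1..k i}. m i j)) /
        (lam_total q k lam + a) powr (b * t + real (\<Sum>i\<in>{1..q}. \<Sum>j\<in>{1..k i}. m i j))) =
       K * pochhammer \<beta> (\<Sum>i\<in>{1..q}. \<Sum>j\<in>{1..k i}. m i j) *
        (\<Prod>i\<in>{1..q}. \<Prod>j\<in>{1..k i}. (lam i j / (LL + a)) ^ m i j / fact (m i j))"
      unfolding P using main unfolding A_def r_def .
  qed
  have sS: "(\<lambda>r. c r * X ^ r / fact r) sums (complex_of_real K * (1 + - X) powr (- complex_of_real \<beta>))"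
  proof -
    have "(\<lambda>r. ((- complex_of_real \<beta>) gchoose r) * (- X) ^ r) sums (1 + - X) powr (- complex_of_real \<beta>)"
      by (rule gen_binomial_complex) (use normX1[of \<theta>] in \<open>simp add: X_def\<close>)
    moreover have "((- complex_of_real \<beta>) gchoose r) * (- X) ^ r = X ^ r * complex_of_real (pochhammer \<beta> r) / fact r" for r
    proof -
      have m1: "(-1::complex) ^ r * (-X) ^ r = X ^ r"
        by (simp only: power_mult_distrib[symmetric]) simp
      have "((- complex_of_real \<beta>) gchoose r) * (- X) ^ r = ((-1) ^ r * (-X) ^ r) * pochhammer (complex_of_real \<beta>) r / fact r"
        by (simp add: gbinomial_pochhammer)
      also have "\<dots> = X ^ r * pochhammer (complex_of_real \<beta>) r / fact r" by (simp only: m1)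
      finally have "((- complex_of_real \<beta>) gchoose r) * (- X) ^ r = X ^ r * pochhammer (complex_of_real \<beta>) r / fact r" .
      then show ?thesis by (simp add: pochhammer_of_real)
    qed
    ultimately have "(\<lambda>r. X ^ r * complex_of_real (pochhammer \<beta> r) / fact r) sums (1 + - X) powr (- complex_of_real \<beta>)"
      by simp
    from sums_mult[OF this, of "complex_of_real K"] show ?thesis
      by (simp add: c_def mult_ac)
  qed
  have sm: "summable (\<lambda>r. norm (c r) * (\<Sum>i\<in>{1..q}. \<Sum>j\<in>{1..k i}. norm (xx \<theta> i j)) ^ r / fact r)"
  proof -
    have "(\<lambda>r. ((- complex_of_real \<beta>) gchoose r) * (- complex_of_real rho) ^ r) sums (1 + - complex_of_real rho) powr (- complex_of_real \<beta>)"
      by (rule gen_binomial_complex) (simp only: norm_minus_cancel norm_of_real abs_of_nonneg[OF rho_nonneg] rho_lt1)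
    moreover have "((- complex_of_real \<beta>) gchoose r) * (- complex_of_real rho) ^ r = complex_of_real (pochhammer \<beta> r * rho ^ r / fact r)" for r
    proof -
      have m1: "(-1::complex) ^ r * (- complex_of_real rho) ^ r = complex_of_real rho ^ r"
        by (simp only: power_mult_distrib[symmetric]) simp
      have "((- complex_of_real \<beta>) gchoose r) * (- complex_of_real rho) ^ r = ((-1) ^ r * (- complex_of_real rho) ^ r) * pochhammer (complex_of_real \<beta>) r / fact r"
        by (simp add: gbinomial_pochhammer)
      also have "\<dots> = complex_of_real rho ^ r * pochhammer (complex_of_real \<beta>) r / fact r" by (simp only: m1)
      finally have "((- complex_of_real \<beta>) gchoose r) * (- complex_of_real rho) ^ r = complex_of_real rho ^ r * pochhammer (complex_of_real \<beta>) r / fact r" .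
      then show ?thesis by (simp add: pochhammer_of_real)
    qed
    ultimately have "summable (\<lambda>r. complex_of_real (pochhammer \<beta> r * rho ^ r / fact r))"
      by (simp add: sums_iff)
    then have "summable (\<lambda>r. pochhammer \<beta> r * rho ^ r / fact r)"
      by (simp only: summable_of_real_iff)
    then have "summable (\<lambda>r. K * (pochhammer \<beta> r * rho ^ r / fact r))"
      by (rule summable_mult)
    moreover have "norm (c r) = K * pochhammer \<beta> r" for r
      using K pochhammer_pos[OF \<beta>, of r] by (simp only: c_def norm_of_real) simp
    ultimately show ?thesis unfolding normsum by (simp add: mult_ac)
  qed
  have "((\<lambda>n. \<Sum>m\<in>Fam q k n. c (\<Sum>i\<in>{1..q}. \<Sum>j\<in>{1..k i}. m i j) *
            (\<Prod>i\<in>{1..q}. \<Prod>j\<in>{1..k i}. xx \<theta> i j ^ m i j / fact (m i j))) has_sum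
        (complex_of_real K * (1 + - X) powr (- complex_of_real \<beta>))) (NQ q)"
    by (rule CG[OF sm]) (use sS in \<open>simp add: X_def\<close>)
  moreover have "complex_of_real (W_pmf q k lam a b t n) * cis (\<Sum>i\<in>{1..q}. \<theta> i * real (n i)) =
     (\<Sum>m\<in>Fam q k n. c (\<Sum>i\<in>{1..q}. \<Sum>j\<in>{1..k i}. m i j) *
            (\<Prod>i\<in>{1..q}. \<Prod>j\<in>{1..k i}. xx \<theta> i j ^ m i j / fact (m i j)))" for n
    unfolding c_def Wn
    by (rule charsum_eq[where w="\<lambda>r. K * pochhammer \<beta> r" and q=q and k=k and p="\<lambda>i j. lam i j / (lam_total q k lam + a)" and n=n and \<theta>=\<theta>])
  ultimately show ?thesis by (simp add: X_def K_def \<beta>_def)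
qed

lemma pi_nonneg: "piL n \<ge> 0"
proof (rule mult_nonneg_nonneg)
  show "0 \<le> b" using bpos by simp
  show "0 \<le> (\<Sum>m\<in>Fam q k n. Gamma (real (\<Sum>i\<in>{1..q}. \<Sum>j\<in>{1..k i}. m i j)) *
     (\<Prod>i\<in>{1..q}. \<Prod>j\<in>{1..k i}. (lam i j / (lam_total q k lam + a)) ^ m i j / fact (m i j)))"
  proof (rule sum_nonneg, rule mult_nonneg_nonneg[OF Gamma_nonneg_nat], rule prod_nonneg, rule prod_nonneg)
    fix m i j assume "i \<in> {1..q}" "j \<in> {1..k i}"
    then have "pp i j \<ge> 0" by (rule pp_nonneg)
    then show "0 \<le> (lam i j / (lam_total q k lam + a)) ^ m i j / fact (m i j)"
      by simp
  qed
qed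

lemma pi_zero: "piL zeroQ = 0"
proof -
  have "(\<Sum>i\<in>{1..q}. \<Sum>j\<in>{1..k i}. m i j) = 0" if m: "m \<in> Fam q k zeroQ" for m
  proof -
    have "m i j = 0" if i: "i \<in> {1..q}" and j: "j \<in> {1..k i}" for i j
    proof -
      have "(\<Sum>j\<in>{1..k i}. j * m i j) = 0" using m i by (auto simp: Fam_def Omega_def zeroQ_def)
      then have "j * m i j = 0" using j by simp
      then show ?thesis using j by simp
    qed
    then show ?thesis by simp
  qed
  then have "(\<Sum>m\<in>Fam q k zeroQ. Gamma (real (\<Sum>i\<in>{1..q}. \<Sum>j\<in>{1..k i}. m i j)) *
     (\<Prod>i\<in>{1..q}. \<Prod>j\<in>{1..k i}. (lam i j / (lam_total q k lam + a)) ^ m i j / fact (m i j))) = 0"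
    by (intro sum.neutral ballI) (simp only: of_nat_0 Gamma_0 mult_zero_left)
  then show ?thesis by simp
qed

lemma pi_real: "((\<lambda>n. piL n) has_sum (- (b * ln (1 - rho)))) (NQ q)"
proof -
  have h: "((\<lambda>n. complex_of_real (piL n) * cis (\<Sum>i\<in>{1..q}. 0 * real (n i)))
     has_sum (- (complex_of_real b * Ln (1 - XX (\<lambda>_. 0))))) (NQ q)"
    by (rule pi_has_sum)
  have e1: "cis (\<Sum>i\<in>{1..q}. 0 * real (n i)) = 1" for n :: "nat \<Rightarrow> nat" by simp
  have e2: "XX (\<lambda>_. 0) = complex_of_real rho"
    by (simp only: mult_zero_left cis_zero mult_1_right of_real_sum)
  have r1: "1 - rho > 0" using rho_lt1 by simp
  have e3: "1 - complex_of_real rho = complex_of_real (1 - rho)" by simp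
  have e4: "- (complex_of_real b * Ln (1 - XX (\<lambda>_. 0))) = complex_of_real (- (b * ln (1 - rho)))"
    unfolding e2 e3 Ln_of_real[OF r1] by simp
  from h have "((\<lambda>n. complex_of_real (piL n)) has_sum complex_of_real (- (b * ln (1 - rho)))) (NQ q)"
    unfolding e1 e4 mult_1_right .
  then show ?thesis by (simp only: has_sum_of_real_iff)
qed

lemma pi_char:
  "infsum (\<lambda>n. complex_of_real (piL n) * (cis (\<Sum>i\<in>{1..q}. \<theta> i * real (n i)) - 1)) (NQ q) =
   - (complex_of_real b * Ln (1 - XX \<theta>)) + complex_of_real (b * ln (1 - rho))"
proof (rule infsumI)
  have "((\<lambda>n. complex_of_real (piL n)) has_sum complex_of_real (- (b * ln (1 - rho)))) (NQ q)"
    by (rule has_sum_of_real[OF pi_real])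
  then have h2: "((\<lambda>n. - complex_of_real (piL n)) has_sum complex_of_real (b * ln (1 - rho))) (NQ q)"
    by (simp add: has_sum_uminus)
  from has_sum_add[OF pi_has_sum[of \<theta>] h2]
  show "((\<lambda>n. complex_of_real (piL n) * (cis (\<Sum>i\<in>{1..q}. \<theta> i * real (n i)) - 1)) has_sum
     (- (complex_of_real b * Ln (1 - XX \<theta>)) + complex_of_real (b * ln (1 - rho)))) (NQ q)"
    by (simp add: algebra_simps)
qed

lemma charfun_eq:
  assumes t: "t > 0"
  shows "W_charfun q k lam a b t \<theta> =
    exp (complex_of_real t * infsum (\<lambda>n. complex_of_real (piL n) * (cis (\<Sum>i\<in>{1..q}. \<theta> i * real (n i)) - 1)) (NQ q))"
proof -
  define \<beta> where "\<beta> = b * t"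
  define X where "X = XX \<theta>"
  define lL where "lL = Ln (1 - X)"
  have W: "W_charfun q k lam a b t \<theta> = complex_of_real (a powr \<beta> / (LL + a) powr \<beta>) *
              (1 + - X) powr (- complex_of_real \<beta>)"
    unfolding W_charfun_def \<beta>_def X_def by (rule infsumI[OF W_has_sum[OF t]])
  have X1: "1 + - X \<noteq> 0"
  proof
    assume "1 + - X = 0" then have "X = 1" by (simp add: algebra_simps)
    then show False using normX1[of \<theta>] by (simp add: X_def)
  qed
  have P1: "(1 + - X) powr (- complex_of_real \<beta>) = exp (- complex_of_real \<beta> * lL)"
    using X1 by (simp add: powr_def lL_def)
  have ar: "a / (LL + a) > 0" using apos c0_pos by simp
  have K: "a powr \<beta> / (LL + a) powr \<beta> = exp (\<beta> * ln (1 - rho))"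
    unfolding one_minus_rho powr_divide[symmetric] using ar apos c0_pos by (simp add: powr_def)
  have "W_charfun q k lam a b t \<theta> = exp (complex_of_real (\<beta> * ln (1 - rho)) + - complex_of_real \<beta> * lL)"
  proof -
    have e: "complex_of_real (exp (\<beta> * ln (1 - rho))) = exp (complex_of_real (\<beta> * ln (1 - rho)))"
      by (rule exp_of_real[symmetric])
    show ?thesis by (simp only: W P1 K e exp_add)
  qed
  also have "complex_of_real (\<beta> * ln (1 - rho)) + - complex_of_real \<beta> * lL =
      complex_of_real t * (- (complex_of_real b * lL) + complex_of_real (b * ln (1 - rho)))"
    by (simp add: \<beta>_def algebra_simps)
  finally show ?thesis unfolding pi_char lL_def X_def .
qed

lemma levy_eq:
  "infsum (\<lambda>n. piL n) {n \<in> NQ q. \<forall>i\<in>{1..q}. n i \<in> A i} = levy_formula q k lam a b A"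
proof -
  define T where "T = (\<lambda>n. \<Sum>m\<in>Fam q k n. Gamma (real (\<Sum>i\<in>{1..q}. \<Sum>j\<in>{1..k i}. m i j)) *
     (\<Prod>i\<in>{1..q}. \<Prod>j\<in>{1..k i}. (lam i j / (lam_total q k lam + a)) ^ m i j / fact (m i j)))"
  define ind where "ind = (\<lambda>n::nat\<Rightarrow>nat. if \<forall>i\<in>{1..q}. n i \<in> A i then 1 else (0::real))"
  have "infsum (\<lambda>n. piL n) {n \<in> NQ q. \<forall>i\<in>{1..q}. n i \<in> A i} =
        infsum (\<lambda>n. b * (T n * ind n)) (NQ q - {zeroQ})"
  proof (rule infsum_cong_neutral)
    fix n assume "n \<in> (NQ q - {zeroQ}) - {n \<in> NQ q. \<forall>i\<in>{1..q}. n i \<in> A i}"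
    then show "b * (T n * ind n) = 0" by (auto simp: ind_def)
  next
    fix n assume "n \<in> {n \<in> NQ q. \<forall>i\<in>{1..q}. n i \<in> A i} - (NQ q - {zeroQ})"
    then have "n = zeroQ" by auto
    then show "piL n = 0" using pi_zero by simp
  next
    fix n assume "n \<in> {n \<in> NQ q. \<forall>i\<in>{1..q}. n i \<in> A i} \<inter> (NQ q - {zeroQ})"
    then show "piL n = b * (T n * ind n)" by (auto simp: ind_def T_def)
  qed
  also have "\<dots> = b * infsum (\<lambda>n. T n * ind n) (NQ q - {zeroQ})"
    by (rule infsum_cmult_right')
  also have "\<dots> = levy_formula q k lam a b A"
    unfolding levy_formula_def T_def ind_def by (simp add: sum_distrib_right)
  finally show ?thesis .
qed

end


theorem mainTheorem16:
  fixes q :: nat and k :: "nat \<Rightarrow> nat" and lam :: "nat \<Rightarrow> nat \<Rightarrow> real" and a b :: real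
  assumes "q \<ge> 1"
    and "\<forall>i\<in>{1..q}. k i \<ge> 1"
    and "\<forall>i\<in>{1..q}. \<forall>j\<in>{1..k i}. lam i j > 0"
    and "a > 0" and "b > 0"
  shows "\<exists>\<pi> :: (nat \<Rightarrow> nat) \<Rightarrow> real.
           (\<forall>n\<in>NQ q. \<pi> n \<ge> 0) \<and> \<pi> zeroQ = 0 \<and> \<pi> summable_on NQ q \<and>
           (\<forall>t>0. \<forall>\<theta> :: nat \<Rightarrow> real.
              W_charfun q k lam a b t \<theta> =
              exp (complex_of_real t *
                   infsum (\<lambda>n. complex_of_real (\<pi> n) *
                                 (cis (\<Sum>i\<in>{1..q}. \<theta> i * real (n i)) - 1)) (NQ q))) \<and>
           (\<forall>A :: nat \<Rightarrow> nat set.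
              infsum \<pi> {n \<in> NQ q. \<forall>i\<in>{1..q}. n i \<in> A i} = levy_formula q k lam a b A)"
proof (rule exI[where x="\<lambda>n. b * (\<Sum>m\<in>Fam q k n. Gamma (real (\<Sum>i\<in>{1..q}. \<Sum>j\<in>{1..k i}. m i j)) *
   (\<Prod>i\<in>{1..q}. \<Prod>j\<in>{1..k i}. (lam i j / (lam_total q k lam + a)) ^ m i j / fact (m i j)))"],
    intro conjI ballI allI impI)
  note H = assms(3) assms(4) assms(5)
  show "\<And>n. 0 \<le> b * (\<Sum>m\<in>Fam q k n. Gamma (real (\<Sum>i\<in>{1..q}. \<Sum>j\<in>{1..k i}. m i j)) *
   (\<Prod>i\<in>{1..q}. \<Prod>j\<in>{1..k i}. (lam i j / (lam_total q k lam + a)) ^ m i j / fact (m i j)))"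
    by (rule pi_nonneg[OF H])
  show "b * (\<Sum>m\<in>Fam q k zeroQ. Gamma (real (\<Sum>i\<in>{1..q}. \<Sum>j\<in>{1..k i}. m i j)) *
   (\<Prod>i\<in>{1..q}. \<Prod>j\<in>{1..k i}. (lam i j / (lam_total q k lam + a)) ^ m i j / fact (m i j))) = 0"
    by (rule pi_zero[OF H])
  show "(\<lambda>n. b * (\<Sum>m\<in>Fam q k n. Gamma (real (\<Sum>i\<in>{1..q}. \<Sum>j\<in>{1..k i}. m i j)) *
   (\<Prod>i\<in>{1..q}. \<Prod>j\<in>{1..k i}. (lam i j / (lam_total q k lam + a)) ^ m i j / fact (m i j)))) summable_on NQ q"
    using pi_real[OF H] by (rule has_sum_imp_summable)
  show "\<And>t \<theta>. 0 < t \<Longrightarrow> W_charfun q k lam a b t \<theta> =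
              exp (complex_of_real t *
                   infsum (\<lambda>n. complex_of_real (b * (\<Sum>m\<in>Fam q k n. Gamma (real (\<Sum>i\<in>{1..q}. \<Sum>j\<in>{1..k i}. m i j)) *
   (\<Prod>i\<in>{1..q}. \<Prod>j\<in>{1..k i}. (lam i j / (lam_total q k lam + a)) ^ m i j / fact (m i j)))) *
                                 (cis (\<Sum>i\<in>{1..q}. \<theta> i * real (n i)) - 1)) (NQ q))"
    by (rule charfun_eq[OF H])
  show "\<And>A. infsum (\<lambda>n. b * (\<Sum>m\<in>Fam q k n. Gamma (real (\<Sum>i\<in>{1..q}. \<Sum>j\<in>{1..k i}. m i j)) *
   (\<Prod>i\<in>{1..q}. \<Prod>j\<in>{1..k i}. (lam i j / (lam_total q k lam + a)) ^ m i j / fact (m i j))))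
      {n \<in> NQ q. \<forall>i\<in>{1..q}. n i \<in> A i} = levy_formula q k lam a b A"
    by (rule levy_eq[OF H])
qed

end
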